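(* A liner $X$ with $|X|>2$ is hyper-Bolyai if and only if $X$ is $3$-long, hyperaffine, and $3$-ranked.
   Context: A liner is a set $X$ of points with a family of subsets called lines such that any two distinct points lie in a unique line and every line contains at least two points. For distinct $x,y$, $\overline{xy}$ is the line through them and $\overline{xx}:=\{x\}$. A set is flat if it contains $\overline{xy}$ for all its distinct points; $\overline A$ is the smallest flat containing $A$; the rank $\|A\|$ is the smallest cardinality of $B\subseteq X$ with $A\subseteq\overline B$; a plane is a flat of rank 3. A flat $A$ is subparallel to a flat $B$ if $A\subseteq\overline{\{a\}\cup B}$ for every $a\in A$; $A\parallel B$ means each is subparallel to the other. $X$ is hyper-Bolyai if for any plane $P\subseteq X$, concurrent (i.e. distinct and intersecting) lines $A,B\subseteq P$ and point $p\in P\setminus B$, there is a line $\Lambda$ with $p\in\Lambda$, $\Lambda\parallel B$ and $|\Lambda\cap A|=1$. $X$ is $3$-long if every line has at least $3$ points. $X$ is hyperaffine if for all $o,x,y\in X$ and $p\in\overline{xy}\setminus\overline{ox}$ there exists $u\in\overline{oy}$ with $\overline{up}\cap\overline{ox}=\varnothing$. $X$ is $3$-ranked if any flats $A\subseteq B$ with $\|A\|=\|B\|\le3$ are equal. *)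

theory Defs
  imports Main "HOL-Library.Extended_Nat"
begin

definition liner :: "'a set \<Rightarrow> 'a set set \<Rightarrow> bool" where
  "liner X L \<longleftrightarrow>
     (\<forall>l\<in>L. l \<subseteq> X \<and> (\<exists>a b. a \<noteq> b \<and> a \<in> l \<and> b \<in> l)) \<and>
     (\<forall>x\<in>X. \<forall>y\<in>X. x \<noteq> y \<longrightarrow> (\<exists>!l. l \<in> L \<and> x \<in> l \<and> y \<in> l))"

definition Line :: "'a set set \<Rightarrow> 'a \<Rightarrow> 'a \<Rightarrow> 'a set" where
  "Line L x y = (if x = y then {x} else (THE l. l \<in> L \<and> x \<in> l \<and> y \<in> l))"

definition flat :: "'a set \<Rightarrow> 'a set set \<Rightarrow> 'a set \<Rightarrow> bool" where
  "flat X L A \<longleftrightarrow> A \<subseteq> X \<and> (\<forall>x\<in>A. \<forall>y\<in>A. x \<noteq> y \<longrightarrow> Line L x y \<subseteq> A)"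

definition flat_hull :: "'a set \<Rightarrow> 'a set set \<Rightarrow> 'a set \<Rightarrow> 'a set" where
  "flat_hull X L A = \<Inter>{F. flat X L F \<and> A \<subseteq> F}"

definition ecard :: "'a set \<Rightarrow> enat" where
  "ecard B = (if finite B then enat (card B) else \<infinity>)"

definition rank :: "'a set \<Rightarrow> 'a set set \<Rightarrow> 'a set \<Rightarrow> enat" where
  "rank X L A = (INF B \<in> {B. B \<subseteq> X \<and> A \<subseteq> flat_hull X L B}. ecard B)"

definition plane :: "'a set \<Rightarrow> 'a set set \<Rightarrow> 'a set \<Rightarrow> bool" where
  "plane X L P \<longleftrightarrow> flat X L P \<and> rank X L P = 3"

definition subparallel :: "'a set \<Rightarrow> 'a set set \<Rightarrow> 'a set \<Rightarrow> 'a set \<Rightarrow> bool" where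
  "subparallel X L A B \<longleftrightarrow> (\<forall>a\<in>A. A \<subseteq> flat_hull X L ({a} \<union> B))"

definition parallel :: "'a set \<Rightarrow> 'a set set \<Rightarrow> 'a set \<Rightarrow> 'a set \<Rightarrow> bool" where
  "parallel X L A B \<longleftrightarrow> subparallel X L A B \<and> subparallel X L B A"

definition hyper_bolyai :: "'a set \<Rightarrow> 'a set set \<Rightarrow> bool" where
  "hyper_bolyai X L \<longleftrightarrow>
     (\<forall>P A B p. plane X L P \<and> P \<subseteq> X \<and> A \<in> L \<and> B \<in> L \<and> A \<subseteq> P \<and> B \<subseteq> P \<and>
        A \<noteq> B \<and> A \<inter> B \<noteq> {} \<and> p \<in> P - B \<longrightarrow>
        (\<exists>\<Lambda>\<in>L. p \<in> \<Lambda> \<and> parallel X L \<Lambda> B \<and> card (\<Lambda> \<inter> A) = 1))"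

definition three_long :: "'a set set \<Rightarrow> bool" where
  "three_long L \<longleftrightarrow> (\<forall>l\<in>L. \<exists>a b c. a \<in> l \<and> b \<in> l \<and> c \<in> l \<and> a \<noteq> b \<and> a \<noteq> c \<and> b \<noteq> c)"

definition hyperaffine :: "'a set \<Rightarrow> 'a set set \<Rightarrow> bool" where
  "hyperaffine X L \<longleftrightarrow>
     (\<forall>z\<in>X. \<forall>x\<in>X. \<forall>y\<in>X. \<forall>p \<in> Line L x y - Line L z x.
        \<exists>u \<in> Line L z y. Line L u p \<inter> Line L z x = {})"

definition three_ranked :: "'a set \<Rightarrow> 'a set set \<Rightarrow> bool" where
  "three_ranked X L \<longleftrightarrow>
     (\<forall>A B. flat X L A \<and> flat X L B \<and> A \<subseteq> B \<and> rank X L A = rank X L B \<and> rank X L B \<le> 3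
        \<longrightarrow> A = B)"

end

theory Submission
  imports Defs
begin

locale lin =
  fixes X :: "'a set" and L :: "'a set set"
  assumes liner: "liner X L"
begin

lemma line_sub: "l \<in> L \<Longrightarrow> l \<subseteq> X"
  using liner unfolding liner_def by blast

lemma line_two: "l \<in> L \<Longrightarrow> \<exists>a b. a \<noteq> b \<and> a \<in> l \<and> b \<in> l"
  using liner unfolding liner_def by blast

lemma ex1_line: assumes "x \<in> X" "y \<in> X" "x \<noteq> y" shows "\<exists>!l. l \<in> L \<and> x \<in> l \<and> y \<in> l"
proof -
  have A: "\<forall>x\<in>X. \<forall>y\<in>X. x \<noteq> y \<longrightarrow> (\<exists>!l. l \<in> L \<and> x \<in> l \<and> y \<in> l)"
    using liner unfolding liner_def by (rule conjunct2)
  show ?thesis using bspec[OF bspec[OF A assms(1)] assms(2)] assms(3) by (rule mp)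
qed

lemma Line_props: assumes "x \<in> X" "y \<in> X" "x \<noteq> y"
  shows "Line L x y \<in> L \<and> x \<in> Line L x y \<and> y \<in> Line L x y"
proof -
  have "(THE l. l \<in> L \<and> x \<in> l \<and> y \<in> l) \<in> L \<and> x \<in> (THE l. l \<in> L \<and> x \<in> l \<and> y \<in> l) \<and> y \<in> (THE l. l \<in> L \<and> x \<in> l \<and> y \<in> l)"
    using theI'[OF ex1_line[OF assms]] by blast
  then show ?thesis using assms(3) unfolding Line_def by simp
qed

lemma Line_in: "x \<in> X \<Longrightarrow> y \<in> X \<Longrightarrow> x \<noteq> y \<Longrightarrow> Line L x y \<in> L"
  using Line_props by blast

lemma Line_left: "x \<in> X \<Longrightarrow> y \<in> X \<Longrightarrow> x \<in> Line L x y"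
  using Line_props[of x y] by (cases "x = y") (auto simp: Line_def)

lemma Line_right: "x \<in> X \<Longrightarrow> y \<in> X \<Longrightarrow> y \<in> Line L x y"
  using Line_props[of x y] by (cases "x = y") (auto simp: Line_def)

lemma Line_unique: assumes "l \<in> L" "x \<in> l" "y \<in> l" "x \<noteq> y" shows "Line L x y = l"
proof -
  have xy: "x \<in> X" "y \<in> X" using assms line_sub by auto
  show ?thesis using ex1_line[OF xy assms(4)] Line_props[OF xy assms(4)] assms by blast
qed

lemma Line_sym: assumes "x \<in> X" "y \<in> X" shows "Line L x y = Line L y x"
proof (cases "x = y")
  case True then show ?thesis by simp
next
  case False
  show ?thesis using Line_unique[OF Line_in[OF assms False] Line_right[OF assms] Line_left[OF assms]] False
    by simp
qed

lemma Line_sub: assumes "x \<in> X" "y \<in> X" shows "Line L x y \<subseteq> X"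
proof (cases "x = y")
  case True then show ?thesis using assms by (simp add: Line_def)
next
  case False then show ?thesis using line_sub[OF Line_in[OF assms False]] by simp
qed

lemma lines_meet: "l \<in> L \<Longrightarrow> m \<in> L \<Longrightarrow> x \<in> l \<Longrightarrow> x \<in> m \<Longrightarrow> y \<in> l \<Longrightarrow> y \<in> m \<Longrightarrow> x \<noteq> y \<Longrightarrow> l = m"
  using Line_unique by metis

lemma flat_line: "l \<in> L \<Longrightarrow> flat X L l"
  unfolding flat_def using line_sub Line_unique by auto

lemma flat_X: "flat X L X"
  unfolding flat_def using Line_sub by auto

lemma flat_empty: "flat X L {}"
  unfolding flat_def by auto

lemma flat_single: "a \<in> X \<Longrightarrow> flat X L {a}"
  unfolding flat_def by auto

lemma Line_in_flat: "flat X L F \<Longrightarrow> x \<in> F \<Longrightarrow> y \<in> F \<Longrightarrow> Line L x y \<subseteq> F"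
  unfolding flat_def by (cases "x = y") (auto simp: Line_def)

lemma hull_flat: assumes "A \<subseteq> X" shows "flat X L (flat_hull X L A)"
proof -
  have "flat_hull X L A \<subseteq> X" unfolding flat_hull_def using flat_X assms by blast
  moreover have "Line L x y \<subseteq> flat_hull X L A"
    if xy: "x \<in> flat_hull X L A" "y \<in> flat_hull X L A" "x \<noteq> y" for x y
    unfolding flat_hull_def
  proof (rule Inter_greatest)
    fix F assume F: "F \<in> {F. flat X L F \<and> A \<subseteq> F}"
    then have "x \<in> F" "y \<in> F" using xy unfolding flat_hull_def by blast+
    then show "Line L x y \<subseteq> F" using F xy(3) unfolding flat_def by blast
  qed
  ultimately show ?thesis unfolding flat_def by blast
qed

lemma hull_sup: "A \<subseteq> flat_hull X L A"
  unfolding flat_hull_def by auto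

lemma hull_least: "flat X L F \<Longrightarrow> A \<subseteq> F \<Longrightarrow> flat_hull X L A \<subseteq> F"
  unfolding flat_hull_def by auto

lemma hull_mono: "A \<subseteq> B \<Longrightarrow> flat_hull X L A \<subseteq> flat_hull X L B"
  unfolding flat_hull_def by auto

lemma hull_of_flat: "flat X L F \<Longrightarrow> flat_hull X L F = F"
  using hull_least hull_sup by blast

lemma hull_sub_X: "A \<subseteq> X \<Longrightarrow> flat_hull X L A \<subseteq> X"
  using hull_least flat_X by blast

lemma hull_empty: "flat_hull X L {} = {}"
  using hull_of_flat flat_empty by blast

lemma hull_single: "a \<in> X \<Longrightarrow> flat_hull X L {a} = {a}"
  using hull_of_flat flat_single by blast

lemma hull_pair: assumes "a \<in> X" "b \<in> X" "a \<noteq> b" shows "flat_hull X L {a, b} = Line L a b"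
proof
  show "flat_hull X L {a, b} \<subseteq> Line L a b"
    by (rule hull_least[OF flat_line[OF Line_in[OF assms]]])
      (use Line_left[OF assms(1,2)] Line_right[OF assms(1,2)] in auto)
  have f: "flat X L (flat_hull X L {a, b})" using hull_flat assms by auto
  have "a \<in> flat_hull X L {a, b}" "b \<in> flat_hull X L {a, b}" using hull_sup[of "{a,b}"] by auto
  then show "Line L a b \<subseteq> flat_hull X L {a, b}" by (rule Line_in_flat[OF f])
qed

lemma rank_le_iff: "rank X L A \<le> enat n \<longleftrightarrow>
   (\<exists>C. C \<subseteq> X \<and> finite C \<and> card C \<le> n \<and> A \<subseteq> flat_hull X L C)"
proof
  assume a: "rank X L A \<le> enat n"
  show "\<exists>C. C \<subseteq> X \<and> finite C \<and> card C \<le> n \<and> A \<subseteq> flat_hull X L C"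
  proof (rule ccontr)
    assume "\<not> ?thesis"
    then have "\<And>B. B \<in> {B. B \<subseteq> X \<and> A \<subseteq> flat_hull X L B} \<Longrightarrow> enat (Suc n) \<le> ecard B"
      by (auto simp: ecard_def) (meson not_less_eq_eq)
    then have "enat (Suc n) \<le> rank X L A" unfolding rank_def by (rule INF_greatest)
    then have "enat (Suc n) \<le> enat n" using a by (rule order_trans)
    then show False by simp
  qed
next
  assume "\<exists>C. C \<subseteq> X \<and> finite C \<and> card C \<le> n \<and> A \<subseteq> flat_hull X L C"
  then obtain C where C: "C \<subseteq> X" "finite C" "card C \<le> n" "A \<subseteq> flat_hull X L C" by blast
  have "rank X L A \<le> ecard C" unfolding rank_def by (rule INF_lower) (use C in auto)
  also have "\<dots> \<le> enat n" using C by (simp add: ecard_def)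
  finally show "rank X L A \<le> enat n" .
qed


lemma small_hull_collinear:
  assumes C: "C \<subseteq> X" "finite C" "card C \<le> 2"
    and abc: "a \<in> flat_hull X L C" "b \<in> flat_hull X L C" "c \<in> flat_hull X L C" "a \<noteq> b"
  shows "c \<in> Line L a b"
proof -
  have "card C = 0 \<or> card C = 1 \<or> card C = 2" using C(3) by auto
  then show ?thesis
  proof (elim disjE)
    assume "card C = 0"
    then have "C = {}" using C(2) by simp
    then show ?thesis using abc hull_empty by simp
  next
    assume "card C = 1"
    then obtain x where "C = {x}" by (auto simp: card_1_singleton_iff)
    then show ?thesis using abc hull_single C(1) by simp
  next
    assume "card C = 2"
    then obtain x y where xy: "C = {x, y}" "x \<noteq> y" by (auto simp: card_2_iff)
    then have xyX: "x \<in> X" "y \<in> X" using C(1) by auto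
    have h: "flat_hull X L C = Line L x y" using hull_pair[OF xyX xy(2)] xy(1) by simp
    have "Line L a b = Line L x y"
      using Line_unique[OF Line_in[OF xyX xy(2)], of a b] abc h by simp
    then show ?thesis using abc h by simp
  qed
qed

lemma rank_gt2:
  assumes "a \<in> S" "b \<in> S" "c \<in> S" "a \<noteq> b" "c \<notin> Line L a b"
  shows "\<not> rank X L S \<le> enat 2"
  using assms small_hull_collinear unfolding rank_le_iff by blast

lemma rank_le3:
  assumes "a \<in> X" "b \<in> X" "c \<in> X" "S \<subseteq> flat_hull X L {a, b, c}"
  shows "rank X L S \<le> enat 3"
  unfolding rank_le_iff
  by (rule exI[of _ "{a,b,c}"]) (use assms in \<open>auto simp: card_insert_if\<close>)

lemma enat3: "(x::enat) \<le> enat 3 \<Longrightarrow> \<not> x \<le> enat 2 \<Longrightarrow> x = 3"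
  by (cases x) (auto simp: numeral_eq_enat)

lemma plane_hull:
  assumes "a \<in> X" "b \<in> X" "c \<in> X" "a \<noteq> b" "c \<notin> Line L a b"
  shows "plane X L (flat_hull X L {a, b, c})"
proof -
  have "rank X L (flat_hull X L {a, b, c}) \<le> enat 3" using rank_le3 assms by blast
  moreover have "\<not> rank X L (flat_hull X L {a, b, c}) \<le> enat 2"
    by (rule rank_gt2[of a _ b c]) (use hull_sup[of "{a,b,c}"] assms in auto)
  ultimately show ?thesis unfolding plane_def using hull_flat assms enat3 by auto
qed

lemma par_meet:
  assumes "parallel X L \<Lambda> B" "B \<in> L" "q \<in> \<Lambda>" "q \<in> B"
  shows "\<Lambda> \<subseteq> B"
proof -
  have "\<Lambda> \<subseteq> flat_hull X L ({q} \<union> B)" using assms(1,3) unfolding parallel_def subparallel_def by blast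
  also have "{q} \<union> B = B" using assms(4) by auto
  also have "flat_hull X L B = B" using hull_of_flat flat_line assms(2) by blast
  finally show ?thesis .
qed

lemma HB:
  assumes hb: "hyper_bolyai X L" and "plane X L P" "P \<subseteq> X" "A \<in> L" "B \<in> L" "A \<subseteq> P" "B \<subseteq> P"
    "A \<noteq> B" "o0 \<in> A" "o0 \<in> B" "p \<in> P" "p \<notin> B"
  obtains \<Lambda> where "\<Lambda> \<in> L" "p \<in> \<Lambda>" "parallel X L \<Lambda> B" "card (\<Lambda> \<inter> A) = 1"
proof -
  have H: "plane X L P \<and> P \<subseteq> X \<and> A \<in> L \<and> B \<in> L \<and> A \<subseteq> P \<and> B \<subseteq> P \<and>
        A \<noteq> B \<and> A \<inter> B \<noteq> {} \<and> p \<in> P - B" using assms by auto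
  have "plane X L P \<and> P \<subseteq> X \<and> A \<in> L \<and> B \<in> L \<and> A \<subseteq> P \<and> B \<subseteq> P \<and>
        A \<noteq> B \<and> A \<inter> B \<noteq> {} \<and> p \<in> P - B \<longrightarrow>
        (\<exists>\<Lambda>\<in>L. p \<in> \<Lambda> \<and> parallel X L \<Lambda> B \<and> card (\<Lambda> \<inter> A) = 1)"
    using hb unfolding hyper_bolyai_def by (elim allE)
  then have "\<exists>\<Lambda>\<in>L. p \<in> \<Lambda> \<and> parallel X L \<Lambda> B \<and> card (\<Lambda> \<inter> A) = 1" using H by (rule mp)
  then show ?thesis using that by blast
qed

lemma hull3_sub: "a \<in> X \<Longrightarrow> b \<in> X \<Longrightarrow> c \<in> X \<Longrightarrow> flat_hull X L {a, b, c} \<subseteq> X"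
  using hull_sub_X by auto

lemma Line_sub_hull3:
  assumes "a \<in> X" "b \<in> X" "c \<in> X" "x \<in> {a,b,c}" "y \<in> {a,b,c}"
  shows "Line L x y \<subseteq> flat_hull X L {a, b, c}"
proof -
  have f: "flat X L (flat_hull X L {a, b, c})" using hull_flat assms(1-3) by auto
  have "x \<in> flat_hull X L {a, b, c}" "y \<in> flat_hull X L {a, b, c}"
    using hull_sup[of "{a,b,c}"] assms(4,5) by auto
  then show ?thesis using Line_in_flat[OF f] by blast
qed


lemma hb_hyperaffine:
  assumes hb: "hyper_bolyai X L"
  shows "hyperaffine X L"
  unfolding hyperaffine_def
proof (intro ballI)
  fix z x y p
  assume X: "z \<in> X" "x \<in> X" "y \<in> X" and p: "p \<in> Line L x y - Line L z x"
  show "\<exists>u\<in>Line L z y. Line L u p \<inter> Line L z x = {}"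
  proof (cases "p \<in> Line L z y")
    case True
    have "Line L p p = {p}" by (simp add: Line_def)
    then show ?thesis using p True by (intro bexI[of _ p]) auto
  next
    case False
    have xy: "x \<noteq> y"
    proof
      assume e: "x = y"
      have "Line L x y = {x}" using e by (simp add: Line_def)
      then show False using p Line_right[OF X(1,2)] by auto
    qed
    have zx: "z \<noteq> x" using False p by auto
    have zy: "z \<noteq> y" using p Line_sym[OF X(2,3)] by auto
    have pX: "p \<in> X" using p Line_sub[OF X(2,3)] by auto
    have znc: "z \<notin> Line L x y"
    proof
      assume z: "z \<in> Line L x y"
      have "Line L z x = Line L x y"
        using Line_unique[OF Line_in[OF X(2,3) xy] z Line_left[OF X(2,3)] zx] .
      then show False using p by simp
    qed
    define P where "P = flat_hull X L {x, y, z}"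
    have plP: "plane X L P" unfolding P_def using plane_hull[OF X(2,3,1) xy znc] .
    have PX: "P \<subseteq> X" unfolding P_def using hull3_sub X by auto
    have AL: "Line L z y \<in> L" using Line_in X zy by auto
    have BL: "Line L z x \<in> L" using Line_in X zx by auto
    have AP: "Line L z y \<subseteq> P" unfolding P_def using Line_sub_hull3[OF X(2,3,1)] by auto
    have BP: "Line L z x \<subseteq> P" unfolding P_def using Line_sub_hull3[OF X(2,3,1)] by auto
    have pP: "p \<in> P" using p Line_sub_hull3[OF X(2,3,1), of x y] unfolding P_def by auto
    have AB: "Line L z y \<noteq> Line L z x"
    proof
      assume e: "Line L z y = Line L z x"
      have "x \<in> Line L z y" using e Line_right[OF X(1,2)] by simp
      then have "Line L x y = Line L z y"
        using Line_unique[OF AL _ Line_right[OF X(1,3)] xy] by simp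
      then show False using znc Line_left[OF X(1,3)] by simp
    qed
    obtain \<Lambda> where La: "\<Lambda> \<in> L" "p \<in> \<Lambda>" "parallel X L \<Lambda> (Line L z x)"
      "card (\<Lambda> \<inter> Line L z y) = 1"
      using HB[OF hb plP PX AL BL AP BP AB Line_left[OF X(1,3)] Line_left[OF X(1,2)] pP] p by blast
    obtain u where u: "\<Lambda> \<inter> Line L z y = {u}" using La(4) by (auto simp: card_1_singleton_iff)
    have up: "u \<noteq> p" using u False by auto
    have Lu: "Line L u p = \<Lambda>" using Line_unique[OF La(1) _ La(2) up] u by auto
    have disj: "\<Lambda> \<inter> Line L z x = {}"
    proof (rule ccontr)
      assume "\<Lambda> \<inter> Line L z x \<noteq> {}"
      then obtain q where "q \<in> \<Lambda>" "q \<in> Line L z x" by auto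
      then have "\<Lambda> \<subseteq> Line L z x" using par_meet[OF La(3) BL] by blast
      then show False using La(2) p by auto
    qed
    show ?thesis using u Lu disj by (intro bexI[of _ u]) auto
  qed
qed

lemma hb_two_point_aux:
  assumes hb: "hyper_bolyai X L" and l: "l \<in> L" "l = {a, b}" "a \<noteq> b" "c \<in> X" "c \<notin> l"
  shows "Line L b c = {b, c}"
proof -
  have abX: "a \<in> X" "b \<in> X" using l line_sub by auto
  have lab: "Line L a b = l" using Line_unique[OF l(1)] l by auto
  have bc: "b \<noteq> c" using l by auto
  have ac: "a \<noteq> c" using l by auto
  show ?thesis
  proof
    show "{b, c} \<subseteq> Line L b c" using Line_left Line_right abX l by auto
    show "Line L b c \<subseteq> {b, c}"
    proof
      fix p assume pbc: "p \<in> Line L b c"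
      show "p \<in> {b, c}"
      proof (rule ccontr)
        assume pn: "p \<notin> {b, c}"
        define P where "P = flat_hull X L {a, b, c}"
        have cnc: "c \<notin> Line L a b" using lab l by simp
        have plP: "plane X L P" unfolding P_def using plane_hull[OF abX l(4) l(3) cnc] .
        have PX: "P \<subseteq> X" unfolding P_def using hull3_sub abX l by auto
        have BL: "Line L a c \<in> L" using Line_in abX l ac by auto
        have CL: "Line L b c \<in> L" using Line_in abX l bc by auto
        have AP: "l \<subseteq> P" unfolding P_def using Line_sub_hull3[OF abX l(4), of a b] lab by auto
        have BP: "Line L a c \<subseteq> P" unfolding P_def using Line_sub_hull3[OF abX l(4)] by auto
        have pP: "p \<in> P" unfolding P_def using Line_sub_hull3[OF abX l(4), of b c] pbc by auto
        have AB: "l \<noteq> Line L a c" using Line_right[OF abX(1) l(4)] l by auto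
        have pB: "p \<notin> Line L a c"
        proof
          assume pa: "p \<in> Line L a c"
          have e: "Line L a c = Line L b c"
            using lines_meet[OF BL CL pa pbc Line_right[OF abX(1) l(4)] Line_right[OF abX(2) l(4)]] pn
            by auto
          have "b \<in> Line L a c" using e Line_left[OF abX(2) l(4)] by simp
          then have "Line L a b = Line L a c" using Line_unique[OF BL Line_left[OF abX(1) l(4)] _ l(3)] by simp
          then show False using cnc Line_right[OF abX(1) l(4)] by simp
        qed
        obtain \<Lambda> where La: "\<Lambda> \<in> L" "p \<in> \<Lambda>" "parallel X L \<Lambda> (Line L a c)" "card (\<Lambda> \<inter> l) = 1"
          using HB[OF hb plP PX l(1) BL AP BP AB _ Line_left[OF abX(1) l(4)] pP pB] l by blast
        obtain x where x: "\<Lambda> \<inter> l = {x}" using La(4) by (auto simp: card_1_singleton_iff)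
        have nomeet: "\<And>q. q \<in> \<Lambda> \<Longrightarrow> q \<in> Line L a c \<Longrightarrow> False"
          using par_meet[OF La(3) BL] La(2) pB by blast
        have "x = a \<or> x = b" using x l by auto
        moreover have "x \<noteq> a" using nomeet[of a] x Line_left[OF abX(1) l(4)] by auto
        ultimately have xb: "x = b" by simp
        have "b \<in> \<Lambda>" using x xb by auto
        then have "\<Lambda> = Line L b c"
          using lines_meet[OF La(1) CL _ Line_left[OF abX(2) l(4)] La(2) pbc] pn by auto
        then show False using nomeet[of c] Line_right[OF abX(2) l(4)] Line_right[OF abX(1) l(4)] by auto
      qed
    qed
  qed
qed

lemma hb_three_long:
  assumes hb: "hyper_bolyai X L"
    and X3: "\<exists>a b c. a \<in> X \<and> b \<in> X \<and> c \<in> X \<and> a \<noteq> b \<and> a \<noteq> c \<and> b \<noteq> c"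
  shows "three_long L"
  unfolding three_long_def
proof
  fix l assume l: "l \<in> L"
  show "\<exists>a b c. a \<in> l \<and> b \<in> l \<and> c \<in> l \<and> a \<noteq> b \<and> a \<noteq> c \<and> b \<noteq> c"
  proof (rule ccontr)
    assume no3: "\<not> ?thesis"
    obtain a b where ab: "a \<noteq> b" "a \<in> l" "b \<in> l" using line_two[OF l] by blast
    have leq: "l = {a, b}" using no3 ab by blast
    obtain c where c: "c \<in> X" "c \<notin> l" using X3 leq by blast
    have abX: "a \<in> X" "b \<in> X" using l ab line_sub by auto
    have bc: "Line L b c = {b, c}" using hb_two_point_aux[OF hb l leq ab(1) c] .
    have ac: "Line L a c = {a, c}" using hb_two_point_aux[OF hb l _ _ c, of b a] leq ab(1) by auto
    have lab: "Line L a b = {a, b}" using Line_unique[OF l ab(2,3) ab(1)] leq by simp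
    have fl: "flat X L {a, b, c}"
      unfolding flat_def using abX c bc ac lab Line_sym[OF abX(1) c(1)] Line_sym[OF abX(2) c(1)]
        Line_sym[OF abX] by auto
    have hh: "flat_hull X L {a, b, c} = {a, b, c}" using hull_of_flat[OF fl] .
    have cnc: "c \<notin> Line L a b" using lab c leq by simp
    have plP: "plane X L {a, b, c}" using plane_hull[OF abX c(1) ab(1) cnc] hh by simp
    have PX: "{a, b, c} \<subseteq> X" using abX c by auto
    have acne: "a \<noteq> c" using c ab leq by auto
    have BL: "Line L a c \<in> L" using Line_in[OF abX(1) c(1) acne] .
    have bB: "b \<notin> Line L a c" using ac ab c leq by auto
    have AB: "l \<noteq> Line L a c" using ac c by auto
    have lP: "l \<subseteq> {a, b, c}" using leq by auto
    have BP: "Line L a c \<subseteq> {a, b, c}" using ac by auto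
    have al: "a \<in> l" using leq by auto
    have aB: "a \<in> Line L a c" using ac by auto
    have bP: "b \<in> {a, b, c}" by auto
    obtain \<Lambda> where La: "\<Lambda> \<in> L" "b \<in> \<Lambda>" "parallel X L \<Lambda> (Line L a c)"
      using HB[OF hb plP PX l BL lP BP AB al aB bP bB] by blast
    have sub: "\<Lambda> \<subseteq> flat_hull X L ({b} \<union> Line L a c)"
      using La(2,3) unfolding parallel_def subparallel_def by blast
    have "{b} \<union> Line L a c = {a, b, c}" using ac by auto
    then have sub2: "\<Lambda> \<subseteq> {a, b, c}" using sub hh by simp
    have nomeet: "\<And>q. q \<in> \<Lambda> \<Longrightarrow> q \<in> Line L a c \<Longrightarrow> False"
      using par_meet[OF La(3) BL] La(2) bB by blast
    have "\<Lambda> \<subseteq> {b}" using sub2 nomeet ac by auto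
    then show False using line_two[OF La(1)] by auto
  qed
qed


lemma hb_three_ranked:
  assumes hb: "hyper_bolyai X L"
  shows "three_ranked X L"
  unfolding three_ranked_def
proof (intro allI impI)
  fix A B
  assume H: "flat X L A \<and> flat X L B \<and> A \<subseteq> B \<and> rank X L A = rank X L B \<and> rank X L B \<le> 3"
  have fA: "flat X L A" and fB: "flat X L B" and AB: "A \<subseteq> B" and rk: "rank X L A = rank X L B"
    and rB: "rank X L B \<le> 3" using H by auto
  have AX: "A \<subseteq> X" and BX: "B \<subseteq> X" using fA fB unfolding flat_def by auto
  have cases4: "A = {} \<or> (\<exists>a. A = {a}) \<or> (\<exists>a b. a \<in> A \<and> b \<in> A \<and> a \<noteq> b \<and> A \<subseteq> Line L a b)
     \<or> (\<exists>a b c. a \<in> A \<and> b \<in> A \<and> c \<in> A \<and> a \<noteq> b \<and> c \<notin> Line L a b)"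
  proof (cases "A = {}")
    case True then show ?thesis by simp
  next
    case False
    then obtain a where a: "a \<in> A" by blast
    show ?thesis
    proof (cases "A = {a}")
      case True then show ?thesis by blast
    next
      case False
      then obtain b where b: "b \<in> A" "b \<noteq> a" using a by blast
      show ?thesis
      proof (cases "A \<subseteq> Line L a b")
        case True then show ?thesis using a b by blast
      next
        case False
        then obtain c where "c \<in> A" "c \<notin> Line L a b" by blast
        then show ?thesis using a b by blast
      qed
    qed
  qed
  consider (e) "A = {}" | (s) a where "A = {a}"
    | (l) a b where "a \<in> A" "b \<in> A" "a \<noteq> b" "A \<subseteq> Line L a b"
    | (p) a b c where "a \<in> A" "b \<in> A" "c \<in> A" "a \<noteq> b" "c \<notin> Line L a b"
    using cases4 by (elim disjE exE conjE) blast+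
  then show "A = B"
  proof cases
    case e
    have "rank X L A \<le> enat 0" unfolding rank_le_iff by (rule exI[of _ "{}"]) (use e in auto)
    then obtain C where C: "C \<subseteq> X" "finite C" "card C \<le> 0" "B \<subseteq> flat_hull X L C"
      using rk rank_le_iff by metis
    then have "C = {}" by auto
    then show ?thesis using C hull_empty e by auto
  next
    case s
    have aX: "a \<in> X" using s AX by auto
    have "rank X L A \<le> enat 1" unfolding rank_le_iff by (rule exI[of _ "{a}"]) (use s aX hull_sup in auto)
    then obtain C where C: "C \<subseteq> X" "finite C" "card C \<le> 1" "B \<subseteq> flat_hull X L C"
      using rk rank_le_iff by metis
    have "card C = 0 \<or> card C = 1" using C(3) by auto
    then have Cd: "C = {} \<or> (\<exists>x. C = {x})" using C(2) by (auto simp: card_1_singleton_iff)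
    then have BC: "B \<subseteq> C" using C hull_empty hull_single by auto
    show ?thesis
    proof (rule ccontr)
      assume "A \<noteq> B"
      then obtain q where "q \<in> B" "q \<noteq> a" using s AB by auto
      then show False using Cd BC s AB by blast
    qed
  next
    case l
    have abX: "a \<in> X" "b \<in> X" using l AX by auto
    have "rank X L A \<le> enat 2" unfolding rank_le_iff
      by (rule exI[of _ "{a,b}"]) (use l abX hull_pair in auto)
    then obtain C where C: "C \<subseteq> X" "finite C" "card C \<le> 2" "B \<subseteq> flat_hull X L C"
      using rk rank_le_iff by metis
    have "B \<subseteq> Line L a b"
      using small_hull_collinear[OF C(1-3)] C(4) l AB by blast
    moreover have "Line L a b \<subseteq> A" using Line_in_flat[OF fA l(1,2)] .
    ultimately show ?thesis using AB by auto
  next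
    case p
    have abcX: "a \<in> X" "b \<in> X" "c \<in> X" using p AX by auto
    have "\<not> rank X L A \<le> enat 2" using rank_gt2[OF p] .
    then have "rank X L B = 3" using rk rB enat3 by (simp add: numeral_eq_enat)
    then have plB: "plane X L B" using fB unfolding plane_def by simp
    have ca: "c \<noteq> a" using p Line_left abcX by auto
    have A1: "Line L a b \<in> L" using Line_in abcX p by auto
    have B1: "Line L a c \<in> L" using Line_in abcX ca by auto
    have A1A: "Line L a b \<subseteq> A" using Line_in_flat[OF fA] p by auto
    have B1A: "Line L a c \<subseteq> A" using Line_in_flat[OF fA] p by auto
    have ne: "Line L a b \<noteq> Line L a c" using p Line_right abcX by auto
    show ?thesis
    proof (rule ccontr)
      assume "A \<noteq> B"
      then obtain q where q: "q \<in> B" "q \<notin> A" using AB by auto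
      obtain \<Lambda> where La: "\<Lambda> \<in> L" "q \<in> \<Lambda>" "parallel X L \<Lambda> (Line L a c)" "card (\<Lambda> \<inter> Line L a b) = 1"
        using HB[OF hb plB BX A1 B1 _ _ ne Line_left[OF abcX(1,2)] Line_left[OF abcX(1,3)] q(1)]
          A1A B1A AB q(2) by blast
      obtain r where r: "\<Lambda> \<inter> Line L a b = {r}" using La(4) by (auto simp: card_1_singleton_iff)
      have "\<Lambda> \<subseteq> flat_hull X L ({r} \<union> Line L a c)"
        using La(3) r unfolding parallel_def subparallel_def by blast
      also have "\<dots> \<subseteq> A" by (rule hull_least[OF fA]) (use r A1A B1A in auto)
      finally show False using La(2) q(2) by auto
    qed
  qed
qed

lemma sub_of_disjoint:
  assumes tr: "three_ranked X L" and P: "plane X L P" and L: "\<Lambda> \<in> L" "B \<in> L" "\<Lambda> \<subseteq> P" "B \<subseteq> P"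
    and dis: "\<Lambda> \<inter> B = {}"
  shows "subparallel X L \<Lambda> B"
  unfolding subparallel_def
proof
  fix l assume l: "l \<in> \<Lambda>"
  obtain b1 b2 where b: "b1 \<noteq> b2" "b1 \<in> B" "b2 \<in> B" using line_two[OF L(2)] by blast
  have X: "b1 \<in> X" "b2 \<in> X" "l \<in> X" using b l L line_sub by auto
  have Bq: "Line L b1 b2 = B" using Line_unique[OF L(2) b(2,3) b(1)] .
  have lnc: "l \<notin> Line L b1 b2" using Bq dis l by auto
  have pl: "plane X L (flat_hull X L {b1, b2, l})" using plane_hull[OF X b(1) lnc] .
  have fP: "flat X L P" using P unfolding plane_def by simp
  have sub: "flat_hull X L {b1, b2, l} \<subseteq> P" by (rule hull_least[OF fP]) (use b l L in auto)
  have "flat_hull X L {b1, b2, l} = P"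
    using tr pl P sub unfolding three_ranked_def plane_def by auto
  moreover have "flat_hull X L {b1, b2, l} \<subseteq> flat_hull X L ({l} \<union> B)"
    using hull_mono b by auto
  ultimately show "\<Lambda> \<subseteq> flat_hull X L ({l} \<union> B)" using L by auto
qed

lemma par_of_disjoint:
  assumes tr: "three_ranked X L" and P: "plane X L P" and L: "\<Lambda> \<in> L" "B \<in> L" "\<Lambda> \<subseteq> P" "B \<subseteq> P"
    and dis: "\<Lambda> \<inter> B = {}"
  shows "parallel X L \<Lambda> B"
  unfolding parallel_def using sub_of_disjoint[OF tr P L dis] sub_of_disjoint[OF tr P L(2,1,4,3)] dis
  by auto

lemma HA:
  assumes ha: "hyperaffine X L" and "z \<in> X" "x \<in> X" "y \<in> X" "p \<in> Line L x y" "p \<notin> Line L z x"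
  obtains u where "u \<in> Line L z y" "Line L u p \<inter> Line L z x = {}"
proof -
  have "p \<in> Line L x y - Line L z x" using assms by auto
  then have "\<exists>u\<in>Line L z y. Line L u p \<inter> Line L z x = {}"
    using ha assms(2-4) unfolding hyperaffine_def by (elim ballE) auto
  then show ?thesis using that by blast
qed

lemma conv:
  assumes tl: "three_long L" and ha: "hyperaffine X L" and tr: "three_ranked X L"
  shows "hyper_bolyai X L"
  unfolding hyper_bolyai_def
proof (intro allI impI)
  fix P A B p
  assume H: "plane X L P \<and> P \<subseteq> X \<and> A \<in> L \<and> B \<in> L \<and> A \<subseteq> P \<and> B \<subseteq> P \<and>
        A \<noteq> B \<and> A \<inter> B \<noteq> {} \<and> p \<in> P - B"
  have plP: "plane X L P" and PX: "P \<subseteq> X" and AL: "A \<in> L" and BL: "B \<in> L" and AP: "A \<subseteq> P"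
    and BP: "B \<subseteq> P" and AB: "A \<noteq> B" and pP: "p \<in> P" and pB: "p \<notin> B" using H by auto
  have fP: "flat X L P" using plP unfolding plane_def by simp
  obtain o0 where o: "o0 \<in> A" "o0 \<in> B" using H by auto
  have oX: "o0 \<in> X" and pX: "p \<in> X" using o AP PX pP by auto
  have "\<exists>\<Lambda>\<in>L. p \<in> \<Lambda> \<and> \<Lambda> \<subseteq> P \<and> \<Lambda> \<inter> B = {} \<and> card (\<Lambda> \<inter> A) = 1"
  proof (cases "p \<in> A")
    case True
    have po: "p \<noteq> o0" using o pB by auto
    obtain b1 b2 where "b1 \<noteq> b2" "b1 \<in> B" "b2 \<in> B" using line_two[OF BL] by blast
    then obtain b where b: "b \<in> B" "b \<noteq> o0" by blast
    have bX: "b \<in> X" using b BP PX by auto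
    have bp: "b \<noteq> p" using b pB by auto
    define M where "M = Line L b p"
    have Mline: "M \<in> L" unfolding M_def using Line_in[OF bX pX bp] .
    have bM: "b \<in> M" and pM: "p \<in> M" unfolding M_def using Line_left Line_right bX pX by auto
    obtain y where y: "y \<in> M" "y \<noteq> b" "y \<noteq> p"
    proof -
      obtain a1 a2 a3 where "a1 \<in> M" "a2 \<in> M" "a3 \<in> M" "a1 \<noteq> a2" "a1 \<noteq> a3" "a2 \<noteq> a3"
        using tl Mline unfolding three_long_def by blast
      then show ?thesis using that by blast
    qed
    have yX: "y \<in> X" using y Mline line_sub by auto
    have Mby: "Line L b y = M" using Line_unique[OF Mline bM y(1)] y(2) by auto
    have Bob: "Line L o0 b = B" using Line_unique[OF BL o(2) b(1)] b(2) by auto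
    obtain u where u: "u \<in> Line L o0 y" "Line L u p \<inter> Line L o0 b = {}"
      using HA[OF ha oX bX yX, of p] Mby Bob pM pB by auto
    have oM: "o0 \<notin> M"
    proof
      assume "o0 \<in> M"
      then have "M = B" using lines_meet[OF Mline BL _ o(2) bM b(1)] b(2) by auto
      then show False using pM pB by simp
    qed
    have yo: "y \<noteq> o0" using oM y by auto
    have OL: "Line L o0 y \<in> L" using Line_in[OF oX yX] yo by auto
    have pOy: "p \<notin> Line L o0 y"
    proof
      assume pin: "p \<in> Line L o0 y"
      have "Line L o0 y = M" using lines_meet[OF OL Mline pin pM Line_right[OF oX yX] y(1)] y(3) by auto
      then show False using oM Line_left[OF oX yX] by auto
    qed
    have up: "u \<noteq> p" using u pOy by auto
    have uX: "u \<in> X" using u Line_sub[OF oX yX] by auto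
    have yP: "y \<in> P" using y Line_in_flat[OF fP, of b p] b BP pP unfolding M_def by auto
    have uP: "u \<in> P" using u Line_in_flat[OF fP, of o0 y] o BP yP by auto
    have LuL: "Line L u p \<in> L" using Line_in[OF uX pX up] .
    have LuP: "Line L u p \<subseteq> P" using Line_in_flat[OF fP uP pP] .
    have dis: "Line L u p \<inter> B = {}" using u Bob by simp
    have pLu: "p \<in> Line L u p" using Line_right[OF uX pX] .
    have "Line L u p \<inter> A = {p}"
    proof (rule ccontr)
      assume "Line L u p \<inter> A \<noteq> {p}"
      then obtain q where q: "q \<in> Line L u p" "q \<in> A" "q \<noteq> p" using pLu True by auto
      have "Line L u p = A" using lines_meet[OF LuL AL pLu True q(1,2)] q(3) by auto
      then show False using dis o by auto
    qed
    then show ?thesis using LuL pLu LuP dis by (intro bexI[of _ "Line L u p"]) auto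
  next
    case False
    obtain a1 a2 where "a1 \<noteq> a2" "a1 \<in> A" "a2 \<in> A" using line_two[OF AL] by blast
    then obtain a where a: "a \<in> A" "a \<noteq> o0" by blast
    have aX: "a \<in> X" using a AP PX by auto
    have ap: "a \<noteq> p" using a False by auto
    define M where "M = Line L a p"
    have Mline: "M \<in> L" unfolding M_def using Line_in[OF aX pX ap] .
    have aM: "a \<in> M" and pM: "p \<in> M" unfolding M_def using Line_left Line_right aX pX by auto
    have MP: "M \<subseteq> P" unfolding M_def using Line_in_flat[OF fP] a AP pP by auto
    have MA: "M \<inter> A = {a}"
    proof (rule ccontr)
      assume "M \<inter> A \<noteq> {a}"
      then obtain q where q: "q \<in> M" "q \<in> A" "q \<noteq> a" using aM a by auto
      have "M = A" using lines_meet[OF Mline AL aM a(1) q(1,2)] q(3) by auto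
      then show False using pM False by auto
    qed
    show ?thesis
    proof (cases "M \<inter> B = {}")
      case True
      then show ?thesis using Mline pM MP MA by (intro bexI[of _ M]) auto
    next
      case False2: False
      then obtain b where b: "b \<in> M" "b \<in> B" by auto
      have bX: "b \<in> X" using b BP PX by auto
      have aB: "a \<notin> B"
      proof
        assume "a \<in> B"
        then have "A = B" using lines_meet[OF AL BL a(1) _ o] a(2) by auto
        then show False using AB by simp
      qed
      have ba: "b \<noteq> a" using b aB by auto
      have bo: "b \<noteq> o0" using MA b o a(2) by auto
      have Bob: "Line L o0 b = B" using Line_unique[OF BL o(2) b(2)] bo by auto
      have Mba: "Line L b a = M" using Line_unique[OF Mline b(1) aM ba] .
      have Aoa: "Line L o0 a = A" using Line_unique[OF AL o(1) a(1)] a(2) by auto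
      obtain u where u: "u \<in> Line L o0 a" "Line L u p \<inter> Line L o0 b = {}"
        using HA[OF ha oX bX aX, of p] Mba Bob pM pB by auto
      have uA: "u \<in> A" using u Aoa by simp
      have up: "u \<noteq> p" using uA False by auto
      have uX: "u \<in> X" using uA AP PX by auto
      have LuL: "Line L u p \<in> L" using Line_in[OF uX pX up] .
      have LuP: "Line L u p \<subseteq> P" using Line_in_flat[OF fP] uA AP pP by auto
      have dis: "Line L u p \<inter> B = {}" using u Bob by simp
      have pLu: "p \<in> Line L u p" using Line_right[OF uX pX] .
      have uLu: "u \<in> Line L u p" using Line_left[OF uX pX] .
      have "Line L u p \<inter> A = {u}"
      proof (rule ccontr)
        assume "Line L u p \<inter> A \<noteq> {u}"
        then obtain q where q: "q \<in> Line L u p" "q \<in> A" "q \<noteq> u" using uLu uA by auto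
        have "Line L u p = A" using lines_meet[OF LuL AL uLu uA q(1,2)] q(3) by auto
        then show False using pLu False by auto
      qed
      then show ?thesis using LuL pLu LuP dis by (intro bexI[of _ "Line L u p"]) auto
    qed
  qed
  then obtain \<Lambda> where La: "\<Lambda> \<in> L" "p \<in> \<Lambda>" "\<Lambda> \<subseteq> P" "\<Lambda> \<inter> B = {}" "card (\<Lambda> \<inter> A) = 1" by blast
  show "\<exists>\<Lambda>\<in>L. p \<in> \<Lambda> \<and> parallel X L \<Lambda> B \<and> card (\<Lambda> \<inter> A) = 1"
    using La par_of_disjoint[OF tr plP La(1) BL La(3) BP La(4)] by blast
qed

end

theorem theorem6p9p5:
  assumes "liner X L"
    and "\<exists>a b c. a \<in> X \<and> b \<in> X \<and> c \<in> X \<and> a \<noteq> b \<and> a \<noteq> c \<and> b \<noteq> c"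
  shows "hyper_bolyai X L \<longleftrightarrow> three_long L \<and> hyperaffine X L \<and> three_ranked X L"
proof -
  interpret lin X L using assms(1) by (rule lin.intro)
  show ?thesis using hb_three_long[OF _ assms(2)] hb_hyperaffine hb_three_ranked conv by blast
qed

end
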